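(* Let $S$ be a semidomain that is not an integral domain. Then the polynomials $x+1$, $x^2+x+1$, $x^3+1$, and $x^4+x^2+1$ are irreducible in $S[x]$.
   Context: A semidomain is a subset $S$ of an integral domain $R$ containing $0$ and $1$ and closed under addition and multiplication; $S$ is an integral domain precisely when it is also closed under additive inverses. $S[x]$ is the semidomain of polynomials in $R[x]$ with coefficients in $S$. An element $a\in S[x]\setminus\{0\}$ is irreducible if it is not a unit of the multiplicative monoid $S[x]\setminus\{0\}$ and $a=bc$ with $b,c\in S[x]\setminus\{0\}$ forces $b$ or $c$ to be a unit. *)

theory Defs
  imports "HOL-Computational_Algebra.Polynomial"
begin

definition semidomain :: "'a::idom set \<Rightarrow> bool" where
  "semidomain S \<longleftrightarrow> 0 \<in> S \<and> 1 \<in> S \<and>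
     (\<forall>a\<in>S. \<forall>b\<in>S. a + b \<in> S) \<and> (\<forall>a\<in>S. \<forall>b\<in>S. a * b \<in> S)"

definition sub_integral_domain :: "'a::idom set \<Rightarrow> bool" where
  "sub_integral_domain S \<longleftrightarrow> semidomain S \<and> (\<forall>a\<in>S. - a \<in> S)"

definition spoly :: "'a::idom set \<Rightarrow> 'a poly set" where
  "spoly S = {p. \<forall>i. coeff p i \<in> S}"

definition spoly_unit :: "'a::idom set \<Rightarrow> 'a poly \<Rightarrow> bool" where
  "spoly_unit S p \<longleftrightarrow> p \<in> spoly S - {0} \<and> (\<exists>q \<in> spoly S - {0}. p * q = 1)"

definition spoly_irreducible :: "'a::idom set \<Rightarrow> 'a poly \<Rightarrow> bool" where
  "spoly_irreducible S a \<longleftrightarrow> a \<in> spoly S - {0} \<and> \<not> spoly_unit S a \<and>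
     (\<forall>b \<in> spoly S - {0}. \<forall>c \<in> spoly S - {0}. a = b * c \<longrightarrow> spoly_unit S b \<or> spoly_unit S c)"

end

theory Submission
  imports Defs
begin

lemma c1: "coeff (b*c) 1 = coeff b 0 * coeff c 1 + coeff b 1 * coeff c 0"
  by (simp add: coeff_mult atMost_Suc algebra_simps)
lemma c2: "coeff (b*c) 2 = coeff b 0 * coeff c 2 + coeff b 1 * coeff c 1 + coeff b 2 * coeff c 0"
  by (simp add: coeff_mult eval_nat_numeral atMost_Suc algebra_simps)
lemma c3: "coeff (b*c) 3 = coeff b 0 * coeff c 3 + coeff b 1 * coeff c 2 + coeff b 2 * coeff c 1 + coeff b 3 * coeff c 0"
  by (simp add: coeff_mult eval_nat_numeral atMost_Suc algebra_simps)
lemma c4: "coeff (b*c) 4 = coeff b 0 * coeff c 4 + coeff b 1 * coeff c 3 + coeff b 2 * coeff c 2 + coeff b 3 * coeff c 1 + coeff b 4 * coeff c 0"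
  by (simp add: coeff_mult eval_nat_numeral atMost_Suc algebra_simps)

lemma cube: fixes u v :: "'a::idom" assumes "u*v = 1" "u+v=1" shows "u*u*u = -1"
proof -
  have "u*u - u + 1 = u*u - u*(u+v) + u*v" using assms by simp
  also have "... = 0" by (simp add: algebra_simps)
  finally have z: "u*u - u + 1 = 0" .
  have "u*u*u + 1 = (u+1)*(u*u - u + 1)" by (simp add: algebra_simps)
  also have "... = 0" using z by simp
  finally show ?thesis by (simp add: eq_neg_iff_add_eq_0)
qed

lemma neg1:
  assumes "semidomain S" "-1 \<in> S" shows "sub_integral_domain S"
  using assms unfolding sub_integral_domain_def semidomain_def
  by (metis mult_minus1)

lemma unit_deg: "spoly_unit S p \<Longrightarrow> degree p = 0"
  unfolding spoly_unit_def
  by (metis DiffE degree_1 degree_mult_eq insertI1 add_is_0)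

lemma deg0_unit:
  assumes sd: "semidomain S" and "b \<in> spoly S - {0}" "c \<in> spoly S - {0}" "lead_coeff (b*c) = 1" "degree b = 0"
  shows "spoly_unit S b"
proof -
  have lc: "lead_coeff c \<in> S" using assms(3) by (simp add: spoly_def)
  have e: "coeff b 0 * lead_coeff c = 1" using assms(4,5) by (simp add: lead_coeff_mult)
  have bb: "b = [:coeff b 0:]" using assms(5) by (rule degree_0_id[symmetric])
  have "b * [:lead_coeff c:] = 1" using e by (subst bb) (simp add: one_pCons mult.commute)
  moreover have "[:lead_coeff c:] \<in> spoly S - {0}"
  proof -
    have "0 \<in> S" using sd by (simp add: semidomain_def)
    then have "\<forall>i. coeff [:lead_coeff c:] i \<in> S" using lc by (simp add: coeff_pCons split: nat.splits)
    moreover have "lead_coeff c \<noteq> 0" using e by auto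
    ultimately show ?thesis by (simp add: spoly_def)
  qed
  ultimately show ?thesis using assms(2) unfolding spoly_unit_def by blast
qed

lemma memS: "semidomain S \<Longrightarrow> a \<in> S \<Longrightarrow> b \<in> S \<Longrightarrow> a * b \<in> S"
  by (simp add: semidomain_def)

lemma coeffS: "b \<in> spoly S \<Longrightarrow> coeff b i \<in> S"
  by (simp add: spoly_def)

lemma alg11:
  fixes ba bb ca cb :: "'a::idom"
  assumes sd: "semidomain S" and S: "ba \<in> S" "bb \<in> S" "ca \<in> S" "cb \<in> S"
    and e0: "ba*ca = 1" and e1: "ba*cb + bb*ca = 1" and e2: "bb*cb = 1"
  shows "-1 \<in> S"
proof -
  have "(ba*cb)*(bb*ca) = (ba*ca)*(bb*cb)" by (simp add: ac_simps)
  also have "... = 1" using e0 e2 by simp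
  finally have "(ba*cb)*(bb*ca) = 1" .
  then have "(ba*cb)*(ba*cb)*(ba*cb) = -1" using e1 by (rule cube)
  moreover have "(ba*cb)*(ba*cb)*(ba*cb) \<in> S" using sd S by (simp add: memS)
  ultimately show ?thesis by simp
qed

lemma alg1n:
  fixes ba bb ca cb cz :: "'a::idom"
  assumes sd: "semidomain S" and S: "ba \<in> S" "cb \<in> S" "cz \<in> S"
    and e0: "ba*ca = 1" and e1: "ba*cb + bb*ca = 0" and en: "bb*cz = 1"
  shows "-1 \<in> S"
proof -
  have h: "ba*cb = -(bb*ca)" using e1 by (simp add: eq_neg_iff_add_eq_0)
  have "(ba*cb)*(cz*ba) = -(bb*ca)*(cz*ba)" using h by simp
  also have "... = -((bb*cz)*(ba*ca))" by (simp add: ac_simps)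
  also have "... = -1" using e0 en by simp
  finally have "-1 = (ba*cb)*(cz*ba)" by simp
  moreover have "(ba*cb)*(cz*ba) \<in> S" using sd S by (simp add: memS)
  ultimately show ?thesis by simp
qed

lemma alg22:
  fixes ba bb bc ca cb cc :: "'a::idom"
  assumes sd: "semidomain S" and S: "ba \<in> S" "bb \<in> S" "bc \<in> S" "ca \<in> S" "cb \<in> S" "cc \<in> S"
    and e0: "ba*ca = 1" and e1: "ba*cb + bb*ca = 0" and e2: "ba*cc + bb*cb + bc*ca = 1"
    and e3: "bb*cc + bc*cb = 0" and e4: "bc*cc = 1"
  shows "-1 \<in> S"
proof (cases "cb = 0")
  case True
  then have "bb*ca = 0" using e1 by simp
  moreover have "ca \<noteq> 0" using e0 by auto
  ultimately have "bb = 0" by simp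
  then have e2': "ba*cc + bc*ca = 1" using e2 by simp
  have "(ba*cc)*(bc*ca) = (ba*ca)*(bc*cc)" by (simp add: ac_simps)
  also have "... = 1" using e0 e4 by simp
  finally have "(ba*cc)*(bc*ca) = 1" .
  then have "(ba*cc)*(ba*cc)*(ba*cc) = -1" using e2' by (rule cube)
  moreover have "(ba*cc)*(ba*cc)*(ba*cc) \<in> S" using sd S by (simp add: memS)
  ultimately show ?thesis by simp
next
  case False
  have "ba*(ba*cb + bb*ca) = 0" using e1 by simp
  then have "ba*ba*cb + bb*(ba*ca) = 0" by (simp add: algebra_simps)
  then have h1: "ba*ba*cb + bb = 0" using e0 by simp
  have "bc*(bb*cc + bc*cb) = 0" using e3 by simp
  then have "bb*(bc*cc) + bc*bc*cb = 0" by (simp add: algebra_simps)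
  then have h2: "bb + bc*bc*cb = 0" using e4 by simp
  have "(ba*ba - bc*bc)*cb = (ba*ba*cb + bb) - (bb + bc*bc*cb)" by (simp add: algebra_simps)
  also have "... = 0" using h1 h2 by simp
  finally have "(ba*ba - bc*bc)*cb = 0" .
  then have "ba*ba - bc*bc = 0" using False by simp
  then have "(ba - bc)*(ba + bc) = 0" by (simp add: algebra_simps)
  then have "ba = bc \<or> ba = -bc" by (auto simp: eq_neg_iff_add_eq_0)
  then show ?thesis
  proof
    assume "ba = -bc"
    then have "ba*cc = -1" using e4 by simp
    then show ?thesis using memS[OF sd S(1) S(6)] by simp
  next
    assume a: "ba = bc"
    then have "ba*cc = ba*ca" using e0 e4 by simp
    moreover have "ba \<noteq> 0" using e0 by auto
    ultimately have "cc = ca" by simp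
    then have "ba*ca + bb*cb + ba*ca = 1" using e2 by (simp add: a[symmetric])
    then have "1 + bb*cb + 1 = 1" using e0 by simp
    then have "bb*cb + 1 = 0" by (simp add: algebra_simps)
    then have "bb*cb = -1" by (simp add: eq_neg_iff_add_eq_0)
    then show ?thesis using memS[OF sd S(2) S(5)] by simp
  qed
qed

lemma irr_scheme:
  fixes S :: "'a::idom set"
  assumes sd: "semidomain S" and nsub: "\<not> sub_integral_domain S"
    and pS: "p \<in> spoly S" and lc: "lead_coeff p = 1" and dp: "degree p > 0"
    and fac: "\<And>b c. b \<in> spoly S \<Longrightarrow> c \<in> spoly S \<Longrightarrow> b*c = p \<Longrightarrow> degree b > 0 \<Longrightarrow> degree c > 0 \<Longrightarrow> -1 \<in> S"
  shows "spoly_irreducible S p"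
proof -
  have p0: "p \<noteq> 0" using dp by auto
  have nu: "\<not> spoly_unit S p"
  proof
    assume "spoly_unit S p"
    then have "degree p = 0" by (rule unit_deg)
    then show False using dp by simp
  qed
  have "spoly_unit S b \<or> spoly_unit S c" if b: "b \<in> spoly S - {0}" and c: "c \<in> spoly S - {0}" and pe: "p = b*c" for b c
  proof (cases "degree b = 0")
    case True then show ?thesis using deg0_unit[OF sd b c] pe lc by simp
  next
    case F: False
    show ?thesis
    proof (cases "degree c = 0")
      case True then show ?thesis using deg0_unit[OF sd c b] pe lc by (simp add: mult.commute)
    next
      case False
      have "b \<in> spoly S" "c \<in> spoly S" using b c by auto
      moreover have "degree b > 0" "degree c > 0" using F False by auto
      ultimately have "-1 \<in> S" using fac[of b c] pe by simp
      then show ?thesis using neg1[OF sd] nsub by blast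
    qed
  qed
  then show ?thesis unfolding spoly_irreducible_def using pS p0 nu by blast
qed

lemma degsum: "(b::'a::idom poly)*c = p \<Longrightarrow> p \<noteq> 0 \<Longrightarrow> degree b + degree c = degree p"
proof -
  assume "b*c = p" "p \<noteq> 0"
  then have "b \<noteq> 0" "c \<noteq> 0" by auto
  then show ?thesis using \<open>b*c = p\<close> degree_mult_eq[of b c] by simp
qed

lemma in_spoly:
  assumes "semidomain S" "\<forall>i. coeff p i = 0 \<or> coeff p i = 1"
  shows "p \<in> spoly S"
proof -
  have "0 \<in> S" "1 \<in> S" using assms(1) by (simp_all add: semidomain_def)
  then have "coeff p i \<in> S" for i using spec[OF assms(2), of i] by (elim disjE) simp_all
  then show ?thesis by (simp add: spoly_def)
qed

lemma f11:
  assumes sd: "semidomain S" and bS: "b \<in> spoly S" and cS: "c \<in> spoly S"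
    and eq: "b*c = [:1,1,1:]" and db: "degree b = 1" and dc: "degree c = 1"
  shows "-1 \<in> (S::'a::idom set)"
proof -
  have z: "coeff b 2 = 0" "coeff c 2 = 0" using db dc by (simp_all add: coeff_eq_0)
  have x0: "coeff b 0 * coeff c 0 = coeff [:1,1,1:] 0" using arg_cong[OF eq, of "\<lambda>p. coeff p 0"] by (simp add: coeff_mult_0)
  have x1: "coeff b 0 * coeff c 1 + coeff b 1 * coeff c 0 = coeff [:1,1,1:] 1" using c1[of b c] eq by simp
  have x2: "coeff b 0 * coeff c 2 + coeff b 1 * coeff c 1 + coeff b 2 * coeff c 0 = coeff [:1,1,1:] 2" using c2[of b c] eq by simp
  show ?thesis
    by (rule alg11[where S=S and ba = "coeff b 0" and bb = "coeff b 1" and ca = "coeff c 0" and cb = "coeff c 1"])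
       (use x0 x1 x2 z sd coeffS[OF bS] coeffS[OF cS] in \<open>simp_all add: eval_nat_numeral\<close>)
qed

lemma f12:
  assumes sd: "semidomain S" and bS: "b \<in> spoly S" and cS: "c \<in> spoly S"
    and eq: "b*c = [:1,0,0,1:]" and db: "degree b = 1" and dc: "degree c = 2"
  shows "-1 \<in> (S::'a::idom set)"
proof -
  have z: "coeff b 2 = 0" "coeff b 3 = 0" "coeff c 3 = 0" using db dc by (simp_all add: coeff_eq_0)
  have x0: "coeff b 0 * coeff c 0 = coeff [:1,0,0,1:] 0" using arg_cong[OF eq, of "\<lambda>p. coeff p 0"] by (simp add: coeff_mult_0)
  have x1: "coeff b 0 * coeff c 1 + coeff b 1 * coeff c 0 = coeff [:1,0,0,1:] 1" using c1[of b c] eq by simp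
  have x3: "coeff b 0 * coeff c 3 + coeff b 1 * coeff c 2 + coeff b 2 * coeff c 1 + coeff b 3 * coeff c 0 = coeff [:1,0,0,1:] 3" using c3[of b c] eq by simp
  show ?thesis
    by (rule alg1n[where S=S and ba = "coeff b 0" and bb = "coeff b 1" and ca = "coeff c 0" and cb = "coeff c 1" and cz = "coeff c 2"])
       (use x0 x1 x3 z sd coeffS[OF bS] coeffS[OF cS] in \<open>simp_all add: eval_nat_numeral\<close>)
qed

lemma f13:
  assumes sd: "semidomain S" and bS: "b \<in> spoly S" and cS: "c \<in> spoly S"
    and eq: "b*c = [:1,0,1,0,1:]" and db: "degree b = 1" and dc: "degree c = 3"
  shows "-1 \<in> (S::'a::idom set)"
proof -
  have z: "coeff b 2 = 0" "coeff b 3 = 0" "coeff b 4 = 0" "coeff c 4 = 0" using db dc by (simp_all add: coeff_eq_0)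
  have x0: "coeff b 0 * coeff c 0 = coeff [:1,0,1,0,1:] 0" using arg_cong[OF eq, of "\<lambda>p. coeff p 0"] by (simp add: coeff_mult_0)
  have x1: "coeff b 0 * coeff c 1 + coeff b 1 * coeff c 0 = coeff [:1,0,1,0,1:] 1" using c1[of b c] eq by simp
  have x4: "coeff b 0 * coeff c 4 + coeff b 1 * coeff c 3 + coeff b 2 * coeff c 2 + coeff b 3 * coeff c 1 + coeff b 4 * coeff c 0 = coeff [:1,0,1,0,1:] 4" using c4[of b c] eq by simp
  show ?thesis
    by (rule alg1n[where S=S and ba = "coeff b 0" and bb = "coeff b 1" and ca = "coeff c 0" and cb = "coeff c 1" and cz = "coeff c 3"])
       (use x0 x1 x4 z sd coeffS[OF bS] coeffS[OF cS] in \<open>simp_all add: eval_nat_numeral\<close>)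
qed

lemma f22:
  assumes sd: "semidomain S" and bS: "b \<in> spoly S" and cS: "c \<in> spoly S"
    and eq: "b*c = [:1,0,1,0,1:]" and db: "degree b = 2" and dc: "degree c = 2"
  shows "-1 \<in> (S::'a::idom set)"
proof -
  have z: "coeff b 3 = 0" "coeff b 4 = 0" "coeff c 3 = 0" "coeff c 4 = 0" using db dc by (simp_all add: coeff_eq_0)
  have x0: "coeff b 0 * coeff c 0 = coeff [:1,0,1,0,1:] 0" using arg_cong[OF eq, of "\<lambda>p. coeff p 0"] by (simp add: coeff_mult_0)
  have x1: "coeff b 0 * coeff c 1 + coeff b 1 * coeff c 0 = coeff [:1,0,1,0,1:] 1" using c1[of b c] eq by simp
  have x2: "coeff b 0 * coeff c 2 + coeff b 1 * coeff c 1 + coeff b 2 * coeff c 0 = coeff [:1,0,1,0,1:] 2" using c2[of b c] eq by simp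
  have x3: "coeff b 0 * coeff c 3 + coeff b 1 * coeff c 2 + coeff b 2 * coeff c 1 + coeff b 3 * coeff c 0 = coeff [:1,0,1,0,1:] 3" using c3[of b c] eq by simp
  have x4: "coeff b 0 * coeff c 4 + coeff b 1 * coeff c 3 + coeff b 2 * coeff c 2 + coeff b 3 * coeff c 1 + coeff b 4 * coeff c 0 = coeff [:1,0,1,0,1:] 4" using c4[of b c] eq by simp
  show ?thesis
    by (rule alg22[where S=S and ba = "coeff b 0" and bb = "coeff b 1" and bc = "coeff b 2" and ca = "coeff c 0" and cb = "coeff c 1" and cc = "coeff c 2"])
       (use x0 x1 x2 x3 x4 z sd coeffS[OF bS] coeffS[OF cS] in \<open>simp_all add: eval_nat_numeral\<close>)
qed

theorem lemma5p2:
  fixes S :: "'a::idom set"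
  assumes "semidomain S" and "\<not> sub_integral_domain S"
  shows "spoly_irreducible S [:1, 1:] \<and>
         spoly_irreducible S [:1, 1, 1:] \<and>
         spoly_irreducible S [:1, 0, 0, 1:] \<and>
         spoly_irreducible S [:1, 0, 1, 0, 1:]"
proof (intro conjI)
  note sd = assms(1) and ns = assms(2)
  show "spoly_irreducible S [:1, 1:]"
  proof (rule irr_scheme[OF sd ns])
    show "[:1, 1:] \<in> spoly S" by (rule in_spoly[OF sd]) (simp add: coeff_pCons split: nat.split)
    fix b c assume "b \<in> spoly S" "c \<in> spoly S" "b * c = [:1, 1:]" "0 < degree b" "0 < degree c"
    with degsum[of b c "[:1,1:]"] show "-1 \<in> S" by simp
  qed simp_all
  show "spoly_irreducible S [:1, 1, 1:]"
  proof (rule irr_scheme[OF sd ns])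
    show "[:1, 1, 1:] \<in> spoly S" by (rule in_spoly[OF sd]) (simp add: coeff_pCons split: nat.split)
    fix b c assume h: "b \<in> spoly S" "c \<in> spoly S" "b * c = [:1, 1, 1:]" "0 < degree b" "0 < degree c"
    with degsum[of b c "[:1,1,1:]"] have "degree b = 1" "degree c = 1" by simp_all
    then show "-1 \<in> S" using f11[OF sd h(1,2,3)] by simp
  qed simp_all
  show "spoly_irreducible S [:1, 0, 0, 1:]"
  proof (rule irr_scheme[OF sd ns])
    show "[:1, 0, 0, 1:] \<in> spoly S" by (rule in_spoly[OF sd]) (simp add: coeff_pCons split: nat.split)
    fix b c assume h: "b \<in> spoly S" "c \<in> spoly S" "b * c = [:1, 0, 0, 1:]" "0 < degree b" "0 < degree c"
    with degsum[of b c "[:1, 0, 0, 1:]"] have "degree b + degree c = 3" by simp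
    then have "(degree b = 1 \<and> degree c = 2) \<or> (degree b = 2 \<and> degree c = 1)" using h(4,5) by linarith
    then show "-1 \<in> S"
    proof
      assume "degree b = 1 \<and> degree c = 2" then show ?thesis using f12[OF sd h(1,2,3)] by simp
    next
      assume "degree b = 2 \<and> degree c = 1" then show ?thesis using f12[OF sd h(2,1)] h(3) by (simp add: mult.commute)
    qed
  qed simp_all
  show "spoly_irreducible S [:1, 0, 1, 0, 1:]"
  proof (rule irr_scheme[OF sd ns])
    show "[:1, 0, 1, 0, 1:] \<in> spoly S" by (rule in_spoly[OF sd]) (simp add: coeff_pCons split: nat.split)
    fix b c assume h: "b \<in> spoly S" "c \<in> spoly S" "b * c = [:1, 0, 1, 0, 1:]" "0 < degree b" "0 < degree c"
    with degsum[of b c "[:1, 0, 1, 0, 1:]"] have "degree b + degree c = 4" by simp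
    then have "(degree b = 1 \<and> degree c = 3) \<or> (degree b = 3 \<and> degree c = 1) \<or> (degree b = 2 \<and> degree c = 2)" using h(4,5) by linarith
    then show "-1 \<in> S"
    proof (elim disjE)
      assume "degree b = 1 \<and> degree c = 3" then show ?thesis using f13[OF sd h(1,2,3)] by simp
    next
      assume "degree b = 3 \<and> degree c = 1" then show ?thesis using f13[OF sd h(2,1)] h(3) by (simp add: mult.commute)
    next
      assume "degree b = 2 \<and> degree c = 2" then show ?thesis using f22[OF sd h(1,2,3)] by simp
    qed
  qed simp_all
qed

end
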